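(* Let $M$ be a set of $m$ sources and $N$ a set of $n$ sinks, let $\mathbf{d}:M\to\mathbb{Z}_{\ge0}$ satisfy $n = 1+\sum_{\mu}\mathbf{d}(\mu)$, and let $P_{\mathbf{d}}$ be the transportation polytope with supply $\mathbf{m}(\mu)=1+m\,\mathbf{d}(\mu)$ and demand $\mathbf{n}(\nu)=m$. If at least two sources $\mu$ satisfy $\mathbf{d}(\mu)\ge 1$, then $P_{\mathbf{d}}$ has exactly $mn$ facets.
   Context: The transportation polytope with supply $\mathbf{m}$ and demand $\mathbf{n}$ (equal totals) is $\{x\in\mathbb{R}_{\ge0}^{M\times N} : \sum_\nu x_{\mu,\nu}=\mathbf{m}(\mu)\ \forall\mu,\ \sum_\mu x_{\mu,\nu}=\mathbf{n}(\nu)\ \forall\nu\}$. *)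

theory Defs
  imports "HOL-Analysis.Analysis"
begin

definition transportation_polytope ::
  "('m::finite \<Rightarrow> real) \<Rightarrow> ('n::finite \<Rightarrow> real) \<Rightarrow> (real ^ ('m \<times> 'n)) set" where
  "transportation_polytope sm dn =
     {x. (\<forall>\<mu> \<nu>. 0 \<le> x $ (\<mu>, \<nu>)) \<and>
         (\<forall>\<mu>. (\<Sum>\<nu>\<in>UNIV. x $ (\<mu>, \<nu>)) = sm \<mu>) \<and>
         (\<forall>\<nu>. (\<Sum>\<mu>\<in>UNIV. x $ (\<mu>, \<nu>)) = dn \<nu>)}"

end

theory Submission imports Defs begin
lemma facets_count:
  fixes S A :: "(real^'i) set"
  assumes SA: "S = A \<inter> {x. \<forall>i. 0 \<le> x$i}" and aff: "affine A"
  and wit: "\<And>i. \<exists>p\<in>S. p$i = 0 \<and> (\<forall>j. j \<noteq> i \<longrightarrow> p$j > 0)"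
  and two: "\<exists>i j::'i. i\<noteq>j"
  shows "card {F. F facet_of S} = CARD('i)"
proof -
  define H where "H = (\<lambda>i::'i. {x::real^'i. (- axis i 1) \<bullet> x \<le> 0})"
  have Hi: "H i = {x. 0 \<le> x$i}" for i
    by (auto simp: H_def inner_axis')
  have injH: "inj H"
  proof (rule injI)
    fix i j assume "H i = H j"
    show "i = j"
    proof (rule ccontr)
      assume "i \<noteq> j"
      have "- axis i 1 \<in> H j" "- axis i 1 \<notin> H i"
        using \<open>i\<noteq>j\<close> by (auto simp: Hi axis_def)
      with \<open>H i = H j\<close> show False by simp
    qed
  qed
  define F where "F = range H"
  define a where "a = (\<lambda>h. - axis (inv H h) (1::real) :: real^'i)"
  have fin: "finite F" unfolding F_def by simp
  have SsubA: "affine hull S \<subseteq> A"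
    using SA aff by (simp add: hull_minimal)
  have IF: "\<Inter>F = {x. \<forall>i. 0 \<le> x$i}" unfolding F_def by (auto simp: Hi)
  have seq: "S = affine hull S \<inter> \<Inter>F"
    using SsubA hull_subset[of S affine] unfolding IF SA by blast
  have faceq: "a h \<noteq> 0 \<and> h = {x. a h \<bullet> x \<le> 0}" if "h \<in> F" for h
  proof -
    from that obtain i where h: "h = H i" by (auto simp: F_def)
    have "inv H h = i" using injH h by simp
    then show ?thesis using h by (simp add: a_def H_def axis_eq_0_iff)
  qed
  have psub: "S \<subset> affine hull S \<inter> \<Inter>F'" if "F' \<subset> F" for F'
  proof -
    from that obtain i where iF: "H i \<notin> F'" by (auto simp: F_def)
    have F'sub: "F' \<subseteq> H ` (UNIV - {i})" using that iF by (auto simp: F_def)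
    have "S \<subseteq> affine hull S \<inter> \<Inter>F'" using seq that by blast
    moreover
    obtain p where p: "p \<in> S" "p$i = 0" "\<And>j. j \<noteq> i \<Longrightarrow> p$j > 0" using wit by blast
    obtain j where "j \<noteq> i" using two by metis
    obtain q where q: "q \<in> S" "q$j = 0" "\<And>k. k \<noteq> j \<Longrightarrow> q$k > 0" using wit by blast
    have qi: "q$i > 0" using q(3) \<open>j\<noteq>i\<close> by metis
    have ev: "\<forall>\<^sub>F t in at_right (0::real). \<forall>k\<in>UNIV - {i}. (1+t) * p$k - t * q$k > 0"
    proof (rule eventually_ball_finite)
      show "\<forall>k\<in>UNIV - {i}. \<forall>\<^sub>F t in at_right (0::real). (1+t) * p$k - t * q$k > 0"
      proof
        fix k assume "k \<in> UNIV - {i}"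
        then have pk: "p$k > 0" using p(3) by auto
        have "((\<lambda>t. (1+t) * p$k - t * q$k) \<longlongrightarrow> (1+0) * p$k - 0 * q$k) (at_right (0::real))"
          by (intro tendsto_intros)
        then show "\<forall>\<^sub>F t in at_right (0::real). (1+t) * p$k - t * q$k > 0"
          using pk by (auto dest: order_tendstoD)
      qed
    qed simp
    then obtain b where b: "b > 0" "\<And>t. t > 0 \<Longrightarrow> t < b \<Longrightarrow> \<forall>k\<in>UNIV - {i}. (1+t) * p$k - t * q$k > 0"
      by (auto simp: eventually_at_right_field)
    define t where "t = b/2"
    have t: "t > 0" "t < b" using b by (auto simp: t_def)
    define z where "z = (1+t) *\<^sub>R p + (-t) *\<^sub>R q"
    have "z \<in> affine hull S"
      unfolding z_def by (rule mem_affine) (use p q hull_inc in auto)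
    moreover have "z \<in> \<Inter>F'"
    proof -
      have "0 \<le> z$k" if "k \<noteq> i" for k
        using b(2)[OF t] that by (force simp: z_def)
      then show ?thesis using F'sub by (auto simp: Hi)
    qed
    moreover have "z \<notin> S"
    proof -
      have "z$i < 0" using p(2) qi t by (simp add: z_def)
      then show ?thesis using SA by (auto simp: not_le)
    qed
    ultimately show ?thesis by blast
  qed
  have fe: "C facet_of S \<longleftrightarrow> (\<exists>h. h \<in> F \<and> C = S \<inter> {x. a h \<bullet> x = 0})" for C
    by (rule facet_of_polyhedron_explicit[OF fin seq faceq psub]) auto
  define G where "G = (\<lambda>i. S \<inter> {x::real^'i. x$i = 0})"
  have aG: "S \<inter> {x. a (H i) \<bullet> x = 0} = G i" for i
    using injH by (auto simp: a_def G_def inner_axis')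
  have "{F. F facet_of S} = range G"
    unfolding fe F_def using aG by auto
  moreover have "inj G"
  proof (rule injI)
    fix i j assume "G i = G j"
    obtain p where p: "p \<in> S" "p$i = 0" "\<And>k. k \<noteq> i \<Longrightarrow> p$k > 0" using wit by blast
    have "p \<in> G i" using p by (simp add: G_def)
    then have "p$j = 0" using \<open>G i = G j\<close> by (auto simp: G_def)
    then show "i = j" using p(3) by force
  qed
  ultimately show ?thesis by (simp add: card_image)
qed

lemma sum_if_single:
  fixes f :: "'a::finite \<Rightarrow> real"
  shows "(\<Sum>x\<in>UNIV. if x = a then c else f x) = c + (\<Sum>x\<in>UNIV. f x) - f a"
proof -
  have "(\<Sum>x\<in>UNIV. if x = a then c else f x) = c + (\<Sum>x\<in>UNIV - {a}. f x)"
    by (subst sum.remove[of _ a]) auto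
  also have "(\<Sum>x\<in>UNIV - {a}. f x) = (\<Sum>x\<in>UNIV. f x) - f a"
    by (subst sum.remove[of _ a]) auto
  finally show ?thesis by simp
qed

theorem lemma4p3:
  fixes d :: "'m::finite \<Rightarrow> nat"
  assumes "CARD('n::finite) = 1 + (\<Sum>\<mu>\<in>UNIV. d \<mu>)"
    and "\<exists>\<mu>1 \<mu>2. \<mu>1 \<noteq> \<mu>2 \<and> d \<mu>1 \<ge> 1 \<and> d \<mu>2 \<ge> 1"
  shows "card {F. F facet_of
            (transportation_polytope
               (\<lambda>\<mu>. 1 + real CARD('m) * real (d \<mu>))
               (\<lambda>\<nu>::'n. real CARD('m)))}
         = CARD('m) * CARD('n)"
proof -
  define m where "m = real CARD('m)"
  define n where "n = real CARD('n)"
  define s where "s = (\<lambda>\<mu>. 1 + m * real (d \<mu>))"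
  define A where "A = {x::real^('m\<times>'n). (\<forall>\<mu>. (\<Sum>\<nu>\<in>UNIV. x $ (\<mu>, \<nu>)) = s \<mu>) \<and>
         (\<forall>\<nu>::'n. (\<Sum>\<mu>\<in>UNIV. x $ (\<mu>, \<nu>)) = m)}"
  let ?S = "transportation_polytope s (\<lambda>\<nu>::'n. m)"
  obtain \<mu>1 \<mu>2 where mu12: "\<mu>1 \<noteq> \<mu>2" "d \<mu>1 \<ge> 1" "d \<mu>2 \<ge> 1" using assms(2) by blast
  have m2: "m \<ge> 2"
  proof -
    have "card {\<mu>1, \<mu>2} \<le> CARD('m)" by (rule card_mono) auto
    then show ?thesis using mu12(1) by (simp add: m_def)
  qed
  have n_eq: "n = 1 + (\<Sum>\<mu>\<in>UNIV. real (d \<mu>))"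
    using assms(1) by (simp add: n_def)
  have sums: "(\<Sum>\<mu>\<in>UNIV. s \<mu>) = m * n"
    by (simp add: s_def sum.distrib n_eq sum_distrib_left m_def algebra_simps)
  have big: "(\<Sum>\<mu>\<in>UNIV. real (d \<mu>)) \<ge> real (d \<mu>0) + 1" for \<mu>0
  proof -
    obtain \<mu>' where "\<mu>' \<noteq> \<mu>0" "d \<mu>' \<ge> 1" using mu12 by metis
    have "(\<Sum>\<mu>\<in>{\<mu>0,\<mu>'}. real (d \<mu>)) \<le> (\<Sum>\<mu>\<in>UNIV. real (d \<mu>))"
      by (rule sum_mono2) auto
    then show ?thesis using \<open>\<mu>' \<noteq> \<mu>0\<close> \<open>d \<mu>' \<ge> 1\<close> by simp
  qed
  have SA: "?S = A \<inter> {x. \<forall>i. 0 \<le> x$i}"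
    unfolding transportation_polytope_def A_def by auto
  have aff: "affine A"
  proof -
    have e1: "(\<Sum>\<nu>\<in>UNIV. ((1 - u) *\<^sub>R x + u *\<^sub>R y) $ (\<mu>, \<nu>)) =
       (1 - u) * (\<Sum>\<nu>\<in>UNIV. x $ (\<mu>, \<nu>)) + u * (\<Sum>\<nu>\<in>UNIV. y $ (\<mu>, \<nu>))"
      for \<mu> x y u by (simp add: sum.distrib sum_distrib_left)
    have e2: "(\<Sum>\<mu>\<in>UNIV. ((1 - u) *\<^sub>R x + u *\<^sub>R y) $ (\<mu>, \<nu>)) =
       (1 - u) * (\<Sum>\<mu>\<in>UNIV. x $ (\<mu>, \<nu>)) + u * (\<Sum>\<mu>\<in>UNIV. y $ (\<mu>, \<nu>))"
      for \<nu> x y u by (simp add: sum.distrib sum_distrib_left)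
    show ?thesis unfolding affine_alt A_def
      by (simp only: e1 e2 mem_Collect_eq) (simp add: algebra_simps)
  qed
  have wit: "\<exists>p\<in>?S. p$i = 0 \<and> (\<forall>j. j \<noteq> i \<longrightarrow> p$j > 0)" for i
  proof -
    obtain \<mu>0 \<nu>0 where i: "i = (\<mu>0, \<nu>0)" by (cases i)
    define R where "R = m * n - s \<mu>0"
    have R_gt: "R > m"
    proof -
      have "m * (n - 1 - real (d \<mu>0)) \<ge> m * 1"
        using big[of \<mu>0] m2 n_eq by (intro mult_left_mono) auto
      then have "m * (n - 1 - real (d \<mu>0)) > 1" using m2 by linarith
      then show ?thesis unfolding R_def s_def by (simp add: algebra_simps)
    qed
    have n1: "n - 1 > 0" using n_eq big[of \<mu>0] by simp
    have spos: "s \<mu> > 0" for \<mu> using m2 by (simp add: s_def add_pos_nonneg)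
    have Rpos: "R > 0" using R_gt m2 by linarith
    define g where "g = (\<lambda>\<mu> \<nu>. if \<mu> = \<mu>0 then (if \<nu> = \<nu>0 then 0 else s \<mu>0 / (n - 1))
        else (if \<nu> = \<nu>0 then s \<mu> * m / R else s \<mu> * (R - m) / (R * (n - 1))))"
    define p :: "real^('m\<times>'n)" where "p = (\<chi> ij. g (fst ij) (snd ij))"
    have pe: "p $ (\<mu>, \<nu>) = g \<mu> \<nu>" for \<mu> \<nu> by (simp add: p_def)
    have pos: "g \<mu> \<nu> > 0" if "(\<mu>, \<nu>) \<noteq> (\<mu>0, \<nu>0)" for \<mu> \<nu>
      using that spos n1 Rpos R_gt m2 by (auto simp: g_def)
    have cardn: "real CARD('n) = n" by (simp add: n_def)
    have cardm: "real CARD('m) = m" by (simp add: m_def)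
    have row: "(\<Sum>\<nu>\<in>UNIV. g \<mu> \<nu>) = s \<mu>" for \<mu>
    proof (cases "\<mu> = \<mu>0")
      case True
      have "(\<Sum>\<nu>\<in>UNIV. g \<mu> \<nu>) = 0 + n * (s \<mu>0 / (n - 1)) - s \<mu>0 / (n - 1)"
        using True by (simp add: g_def sum_if_single cardn)
      also have "\<dots> = (n - 1) * s \<mu>0 / (n - 1)" by (simp add: diff_divide_distrib left_diff_distrib)
      also have "\<dots> = s \<mu>" using n1 True by simp
      finally show ?thesis .
    next
      case False
      define c where "c = s \<mu> * (R - m) / (R * (n - 1))"
      have "(\<Sum>\<nu>\<in>UNIV. g \<mu> \<nu>) = s \<mu> * m / R + n * c - c"
        using False by (simp add: g_def sum_if_single cardn c_def)
      also have "\<dots> = s \<mu> * m / R + (n - 1) * c" by (simp add: algebra_simps)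
      also have "(n - 1) * c = s \<mu> * (R - m) / R" using n1 by (simp add: c_def)
      also have "s \<mu> * m / R + s \<mu> * (R - m) / R = s \<mu>" using Rpos
        by (simp add: field_simps)
      finally show ?thesis .
    qed
    have Rsum: "(\<Sum>\<mu>\<in>UNIV. s \<mu>) - s \<mu>0 = R" using sums by (simp add: R_def)
    have col: "(\<Sum>\<mu>\<in>UNIV. g \<mu> \<nu>) = m" for \<nu>
    proof (cases "\<nu> = \<nu>0")
      case True
      have "(\<Sum>\<mu>\<in>UNIV. g \<mu> \<nu>) = 0 + (\<Sum>\<mu>\<in>UNIV. s \<mu> * m / R) - s \<mu>0 * m / R"
        using True by (simp add: g_def sum_if_single)
      also have "\<dots> = ((\<Sum>\<mu>\<in>UNIV. s \<mu>) - s \<mu>0) * m / R"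
      proof -
        have "(\<Sum>\<mu>\<in>UNIV. s \<mu> * m / R) = (\<Sum>\<mu>\<in>UNIV. s \<mu>) * m / R"
          by (simp only: sum_divide_distrib[symmetric] sum_distrib_right[symmetric])
        then show ?thesis by (simp add: diff_divide_distrib left_diff_distrib)
      qed
      also have "\<dots> = m" using Rsum Rpos by simp
      finally show ?thesis .
    next
      case False
      have "(\<Sum>\<mu>\<in>UNIV. g \<mu> \<nu>) = s \<mu>0 / (n - 1) + (\<Sum>\<mu>\<in>UNIV. s \<mu> * (R - m) / (R * (n - 1)))
           - s \<mu>0 * (R - m) / (R * (n - 1))"
        using False by (simp add: g_def sum_if_single)
      also have "\<dots> = s \<mu>0 / (n - 1) + ((\<Sum>\<mu>\<in>UNIV. s \<mu>) - s \<mu>0) * (R - m) / (R * (n - 1))"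
      proof -
        have "(\<Sum>\<mu>\<in>UNIV. s \<mu> * (R - m) / (R * (n - 1))) = (\<Sum>\<mu>\<in>UNIV. s \<mu>) * (R - m) / (R * (n - 1))"
          by (simp only: sum_divide_distrib[symmetric] sum_distrib_right[symmetric])
        then show ?thesis by (simp add: diff_divide_distrib left_diff_distrib)
      qed
      also have "\<dots> = s \<mu>0 / (n - 1) + (R - m) / (n - 1)" using Rsum Rpos
        by simp
      also have "\<dots> = (s \<mu>0 + R - m) / (n - 1)"
        by (simp add: add_divide_distrib[symmetric] add_diff_eq)
      also have "\<dots> = m" using n1 by (simp add: R_def field_simps)
      finally show ?thesis .
    qed
    have "p \<in> ?S"
    proof -
      have nn: "0 \<le> g \<mu> \<nu>" for \<mu> \<nu>
        using pos[of \<mu> \<nu>] by (cases "(\<mu>, \<nu>) = (\<mu>0, \<nu>0)") (auto simp: g_def)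
      show ?thesis unfolding transportation_polytope_def using nn row col
        by (simp add: pe)
    qed
    moreover have "p$i = 0" by (simp add: i pe g_def)
    moreover have "\<forall>j. j \<noteq> i \<longrightarrow> p$j > 0"
      using pos by (auto simp: i pe)
    ultimately show ?thesis by blast
  qed
  have two: "\<exists>i j::'m\<times>'n. i \<noteq> j"
    using mu12(1) by blast
  have "card {F. F facet_of ?S} = CARD('m\<times>'n)"
    by (rule facets_count[OF SA aff wit two])
  then show ?thesis by (simp add: s_def m_def)
qed

end
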